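(* Let $H\in(1/2,1)$, $\vartheta>0$ and let $S^H$ be a sub-fractional Brownian motion. There is a constant $C_{\vartheta,H}$ depending only on $\vartheta$ and $H$ such that for all $0\le s,t\le T$ with $s\ne t$, $$\mathbf E\Big[\int_s^T e^{-\vartheta(x-s)}dS^H_x\int_t^T e^{-\vartheta(y-t)}dS^H_y\Big]\le C_{\vartheta,H}|t-s|^{2H-2}$$ and $$\mathbf E\Big[\int_0^t e^{-\vartheta(t-u)}dS^H_u\int_0^s e^{-\vartheta(s-v)}dS^H_v\Big]\le C_{\vartheta,H}|t-s|^{2H-2}.$$
   Context: A sub-fractional Brownian motion $S^H$ is a centered Gaussian process with $S^H_0=0$ and covariance $\mathbf E(S^H_tS^H_s)=t^{2H}+s^{2H}-\frac12(|t-s|^{2H}+(t+s)^{2H})$. The integrals of deterministic functions with respect to $S^H$ are Wiener integrals, with $\mathbf E\int f\,dS^H\int g\,dS^H=\iint f(u)g(v)H(2H-1)(|u-v|^{2H-2}-(u+v)^{2H-2})\,du\,dv$. *)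

theory Defs
  imports "HOL-Analysis.Analysis"
begin

text \<open>Covariance kernel of the Wiener integral w.r.t. sub-fractional Brownian motion:
  phi_H(u,v) = H(2H-1)(|u-v|^(2H-2) - (u+v)^(2H-2)).\<close>
definition sfbm_kernel :: "real \<Rightarrow> real \<Rightarrow> real \<Rightarrow> real" where
  "sfbm_kernel H u v = H * (2*H - 1) * (\<bar>u - v\<bar> powr (2*H - 2) - (u + v) powr (2*H - 2))"

text \<open>E[ (int_a^b f dS^H) (int_c^d g dS^H) ] for deterministic f, g, given by the
  Wiener-integral isometry  iint f(u) g(v) phi_H(u,v) du dv.\<close>
definition sfbm_wiener_cov ::
  "real \<Rightarrow> (real \<Rightarrow> real) \<Rightarrow> real \<Rightarrow> real \<Rightarrow> (real \<Rightarrow> real) \<Rightarrow> real \<Rightarrow> real \<Rightarrow> real" where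
  "sfbm_wiener_cov H f a b g c d =
     (LBINT u:{a..b}. (LBINT v:{c..d}. f u * g v * sfbm_kernel H u v))"

end

theory Submission
  imports Defs
begin

lemma powr_right:
  fixes r b u :: real assumes "r > 0" "b > -1"
  shows "((\<lambda>v. (v - u) powr b) has_integral r powr (b+1)/(b+1)) {u..u+r}"
proof -
  have h: "((\<lambda>x. x powr b) has_integral r powr (b+1)/(b+1)) (cbox 0 r)"
    using has_integral_powr_from_0[of b r] assms by simp
  from has_integral_affinity'[OF h, of 1 "-u"]
  show ?thesis by (simp add: add.commute)
qed

lemma powr_left:
  fixes r b u :: real assumes "r > 0" "b > -1"
  shows "((\<lambda>v. (u - v) powr b) has_integral r powr (b+1)/(b+1)) {u-r..u}"
proof -
  have h: "((\<lambda>x. x powr b) has_integral r powr (b+1)/(b+1)) {0..r}"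
    using has_integral_powr_from_0[of b r] assms by simp
  have h2: "((\<lambda>x. (-x) powr b) has_integral r powr (b+1)/(b+1)) (cbox (-r) 0)"
    using has_integral_reflect_lemma_real[OF h] by simp
  from has_integral_affinity'[OF h2, of 1 "-u"]
  show ?thesis by simp
qed

lemma powr_sym:
  fixes r b u :: real assumes "r > 0" "b > -1"
  shows "((\<lambda>v. if v \<in> {u-r..u+r} then \<bar>u - v\<bar> powr b else 0) has_integral 2*(r powr (b+1)/(b+1))) UNIV"
proof -
  have L: "((\<lambda>v. \<bar>u - v\<bar> powr b) has_integral r powr (b+1)/(b+1)) {u-r..u}"
    by (rule has_integral_eq[OF _ powr_left[OF assms]]) (simp add: abs_of_nonneg)
  have R: "((\<lambda>v. \<bar>u - v\<bar> powr b) has_integral r powr (b+1)/(b+1)) {u..u+r}"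
    by (rule has_integral_eq[OF _ powr_right[OF assms]]) (simp add: abs_of_nonpos)
  have C: "((\<lambda>v. \<bar>u - v\<bar> powr b) has_integral (r powr (b+1)/(b+1) + r powr (b+1)/(b+1))) {u-r..u+r}"
    by (rule has_integral_combine[OF _ _ L R]) (use assms in auto)
  have C2: "((\<lambda>v. \<bar>u - v\<bar> powr b) has_integral 2*(r powr (b+1)/(b+1))) {u-r..u+r}"
    unfolding mult_2 by (rule C)
  show ?thesis by (rule has_integral_restrict_UNIV[THEN iffD2, OF C2])
qed

lemma int_le2:
  fixes f ga gb :: "real \<Rightarrow> real"
  assumes le: "\<And>x. x \<in> A \<Longrightarrow> f x \<le> ga x + gb x"
    and n1: "\<And>x. x \<in> Aa \<Longrightarrow> 0 \<le> ga x" and n2: "\<And>x. x \<in> Ab \<Longrightarrow> 0 \<le> gb x"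
    and s1: "A \<subseteq> Aa" and s2: "A \<subseteq> Ab"
    and i1: "(ga has_integral Ia) Aa" and i2: "(gb has_integral Ib) Ab"
  shows "(LBINT x:A. f x) \<le> Ia + Ib"
proof -
  define G where "G = (\<lambda>x. indicator Aa x * ga x + indicator Ab x * gb x)"
  have j1: "((\<lambda>x. indicator Aa x * ga x) has_integral Ia) UNIV"
  proof -
    have "((\<lambda>x. if x \<in> Aa then ga x else 0) has_integral Ia) UNIV"
      using i1 has_integral_restrict_UNIV by blast
    then show ?thesis by (rule has_integral_eq[rotated]) (simp add: indicator_def)
  qed
  have j2: "((\<lambda>x. indicator Ab x * gb x) has_integral Ib) UNIV"
  proof -
    have "((\<lambda>x. if x \<in> Ab then gb x else 0) has_integral Ib) UNIV"
      using i2 has_integral_restrict_UNIV by blast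
    then show ?thesis by (rule has_integral_eq[rotated]) (simp add: indicator_def)
  qed
  have GI: "(G has_integral (Ia + Ib)) UNIV"
    unfolding G_def using has_integral_add[OF j1 j2] by simp
  have Gnn: "0 \<le> G x" for x
    unfolding G_def using n1 n2 by (auto simp: indicator_def)
  have NG: "(\<integral>\<^sup>+x. ennreal (G x) \<partial>lborel) = ennreal (Ia + Ib)"
    using nn_integral_has_integral_lebesgue[of UNIV G, OF _ GI] Gnn by simp
  have I0: "0 \<le> Ia + Ib"
    using has_integral_nonneg[OF GI] Gnn by simp
  define h where "h = (\<lambda>x. indicator A x *\<^sub>R f x)"
  have hG: "max (h x) 0 \<le> G x" for x
  proof (cases "x \<in> A")
    case True
    then have "x \<in> Aa" "x \<in> Ab" using s1 s2 by auto
    then show ?thesis using True le[OF True] n1 n2 unfolding h_def G_def by auto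
  next
    case False then show ?thesis using Gnn[of x] unfolding h_def by simp
  qed
  have eq: "(LBINT x:A. f x) = integral\<^sup>L lborel h"
    unfolding h_def set_lebesgue_integral_def by simp
  show ?thesis
  proof (cases "integrable lborel h")
    case True
    have im: "integrable lborel (\<lambda>x. max (h x) 0)"
      using True by auto
    have "integral\<^sup>L lborel h \<le> integral\<^sup>L lborel (\<lambda>x. max (h x) 0)"
      by (rule integral_mono[OF True im]) simp
    also have "\<dots> = enn2real (\<integral>\<^sup>+x. ennreal (max (h x) 0) \<partial>lborel)"
      by (rule integral_eq_nn_integral) (use im in auto)
    also have "\<dots> \<le> enn2real (\<integral>\<^sup>+x. ennreal (G x) \<partial>lborel)"
    proof (rule enn2real_mono)
      show "(\<integral>\<^sup>+x. ennreal (max (h x) 0) \<partial>lborel) \<le> (\<integral>\<^sup>+x. ennreal (G x) \<partial>lborel)"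
        by (rule nn_integral_mono) (rule ennreal_leI[OF hG])
      show "(\<integral>\<^sup>+x. ennreal (G x) \<partial>lborel) < top" using NG by simp
    qed
    also have "\<dots> = Ia + Ib" using NG I0 by simp
    finally show ?thesis using eq by simp
  next
    case False
    then show ?thesis using eq I0 not_integrable_integral_eq[OF False] by simp
  qed
qed

lemma exp_right:
  fixes c a b :: real assumes "c > 0" "a \<le> b"
  shows "((\<lambda>v. exp (-c*(v-a))) has_integral (1 - exp (-c*(b-a)))/c) {a..b}"
proof -
  have "((\<lambda>v. exp (-c*(v-a))) has_integral ((-exp (-c*(b-a))/c) - (-exp (-c*(a-a))/c))) {a..b}"
    using assms
    by (intro fundamental_theorem_of_calculus)
       (auto intro!: derivative_eq_intros
             simp flip: has_real_derivative_iff_has_vector_derivative)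
  then show ?thesis by (simp add: diff_divide_distrib)
qed

lemma exp_left:
  fixes c a b :: real assumes "c > 0" "a \<le> b"
  shows "((\<lambda>v. exp (-c*(b-v))) has_integral (1 - exp (-c*(b-a)))/c) {a..b}"
proof -
  have "((\<lambda>v. exp (-c*(b-v))) has_integral ((exp (-c*(b-b))/c) - (exp (-c*(b-a))/c))) {a..b}"
    using assms
    by (intro fundamental_theorem_of_calculus)
       (auto intro!: derivative_eq_intros
             simp flip: has_real_derivative_iff_has_vector_derivative)
  then show ?thesis by (simp add: diff_divide_distrib)
qed

lemma core:
  fixes H \<theta> r E IP IQ :: real and p q PP :: "real \<Rightarrow> real" and A B :: "real set"
  assumes H: "1/2 < H" "H < 1" and th: "\<theta> > 0" and r: "r > 0" and E: "0 \<le> E"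
    and hp: "\<And>u. u \<in> A \<Longrightarrow> 0 \<le> p u \<and> p u \<le> PP u"
    and hq: "\<And>v. v \<in> B \<Longrightarrow> 0 \<le> q v"
    and near: "\<And>u v. u \<in> A \<Longrightarrow> v \<in> B \<Longrightarrow> \<bar>u - v\<bar> \<le> r \<Longrightarrow> p u * q v \<le> E * PP u"
    and iP: "(PP has_integral IP) A" and iP2: "IP \<le> 2/\<theta>"
    and iQ: "(q has_integral IQ) B" and iQ2: "IQ \<le> 1/\<theta>"
  shows "(LBINT u:A. (LBINT v:B. p u * q v * sfbm_kernel H u v))
     \<le> 2/\<theta> * (H*(2*H-1) * r powr (2*H-2) / \<theta> + H*(2*H-1) * E * (2*(r powr (2*H-2+1)/(2*H-2+1))))"
proof -
  define K where "K = H*(2*H-1)"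
  define \<beta> where "\<beta> = 2*H-2"
  define N where "N = (\<lambda>u v. if v \<in> {u-r..u+r} then \<bar>u - v\<bar> powr \<beta> else 0)"
  define J where "J = 2*(r powr (\<beta>+1)/(\<beta>+1))"
  have K0: "K > 0" unfolding K_def using H by auto
  have b1: "\<beta> > -1" unfolding \<beta>_def using H by auto
  have NI: "((\<lambda>v. N u v) has_integral J) UNIV" for u
    unfolding N_def J_def using powr_sym[OF r b1] by simp
  have N0: "0 \<le> N u v" for u v unfolding N_def by auto
  have J0: "0 \<le> J" using has_integral_nonneg[OF NI N0] .
  have P0: "u \<in> A \<Longrightarrow> 0 \<le> PP u" for u using hp[of u] by auto
  have IQ0: "0 \<le> IQ" using has_integral_nonneg[OF iQ hq] .
  have IP0: "0 \<le> IP" using has_integral_nonneg[OF iP P0] .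
  have ker: "sfbm_kernel H u v \<le> K * (r powr \<beta> + N u v)" for u v
  proof -
    have "sfbm_kernel H u v \<le> K * \<bar>u - v\<bar> powr \<beta>"
      unfolding sfbm_kernel_def K_def \<beta>_def using K0[unfolded K_def]
      by (simp add: right_diff_distrib)
    also have "\<bar>u - v\<bar> powr \<beta> \<le> r powr \<beta> + N u v"
    proof (cases "v \<in> {u-r..u+r}")
      case True then show ?thesis unfolding N_def by simp
    next
      case False
      then have "r \<le> \<bar>u - v\<bar>" by auto
      then have "\<bar>u - v\<bar> powr \<beta> \<le> r powr \<beta>"
        using r H by (intro powr_mono2') (auto simp: \<beta>_def)
      then show ?thesis using N0[of u v] by simp
    qed
    then have "K * \<bar>u - v\<bar> powr \<beta> \<le> K * (r powr \<beta> + N u v)" using K0 by simp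
    finally show ?thesis .
  qed
  define M where "M = K * r powr \<beta> * IQ + K * E * J"
  have inner: "(LBINT v:B. p u * q v * sfbm_kernel H u v) \<le> PP u * M" if uA: "u \<in> A" for u
  proof -
    have "(LBINT v:B. p u * q v * sfbm_kernel H u v) \<le> K * r powr \<beta> * PP u * IQ + K * E * PP u * J"
    proof (rule int_le2[where Aa=B and Ab=UNIV])
      show "((\<lambda>v. K * r powr \<beta> * PP u * q v) has_integral K * r powr \<beta> * PP u * IQ) B"
        using has_integral_mult_right[OF iQ, of "K * r powr \<beta> * PP u"] by simp
      show "((\<lambda>v. K * E * PP u * N u v) has_integral K * E * PP u * J) UNIV"
        using has_integral_mult_right[OF NI[of u], of "K * E * PP u"] by simp
      show "0 \<le> K * r powr \<beta> * PP u * q v" if "v \<in> B" for v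
        using K0 P0[OF uA] hq[OF that] by simp
      show "0 \<le> K * E * PP u * N u v" for v
        using K0 P0[OF uA] E N0[of u v] by simp
      show "p u * q v * sfbm_kernel H u v \<le> K * r powr \<beta> * PP u * q v + K * E * PP u * N u v"
        if vB: "v \<in> B" for v
      proof -
        have pq: "0 \<le> p u * q v" using hp[OF uA] hq[OF vB] by simp
        have "p u * q v * sfbm_kernel H u v \<le> p u * q v * (K * (r powr \<beta> + N u v))"
          by (rule mult_left_mono[OF ker pq])
        also have "\<dots> = K * r powr \<beta> * (p u * q v) + K * N u v * (p u * q v)"
          by (simp add: algebra_simps)
        also have "\<dots> \<le> K * r powr \<beta> * PP u * q v + K * E * PP u * N u v"
        proof (rule add_mono)
          have "p u * q v \<le> PP u * q v" using hp[OF uA] hq[OF vB] by (simp add: mult_right_mono)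
          then have "r powr \<beta> * (p u * q v) \<le> r powr \<beta> * (PP u * q v)"
            by (rule mult_left_mono) simp
          then show "K * r powr \<beta> * (p u * q v) \<le> K * r powr \<beta> * PP u * q v"
            using K0 by (simp add: mult.assoc)
          show "K * N u v * (p u * q v) \<le> K * E * PP u * N u v"
          proof (cases "v \<in> {u-r..u+r}")
            case True
            then have "\<bar>u - v\<bar> \<le> r" by auto
            from near[OF uA vB this] have "p u * q v \<le> E * PP u" .
            then have "K * N u v * (p u * q v) \<le> K * N u v * (E * PP u)"
              using K0 N0[of u v] by (intro mult_left_mono) auto
            then show ?thesis by (simp add: algebra_simps)
          next
            case False then show ?thesis unfolding N_def by auto
          qed
        qed
        finally show ?thesis .
      qed
    qed auto
    also have "\<dots> = PP u * M" unfolding M_def by (simp add: algebra_simps)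
    finally show ?thesis .
  qed
  have M0: "0 \<le> M" unfolding M_def using K0 IQ0 E J0 by simp
  have "(LBINT u:A. (LBINT v:B. p u * q v * sfbm_kernel H u v)) \<le> IP * M + 0"
  proof (rule int_le2[where Aa=A and Ab=UNIV and gb="\<lambda>_. 0"])
    show "((\<lambda>u. PP u * M) has_integral IP * M) A"
      using has_integral_mult_left[OF iP] by simp
  qed (use inner P0 M0 in auto)
  also have "\<dots> \<le> 2/\<theta> * M" using mult_right_mono[OF iP2 M0] by simp
  also have "\<dots> \<le> 2/\<theta> * (K * r powr \<beta> / \<theta> + K * E * J)"
  proof -
    have "K * r powr \<beta> * IQ \<le> K * r powr \<beta> * (1/\<theta>)"
      using K0 iQ2 by (intro mult_left_mono) auto
    then have "M \<le> K * r powr \<beta> / \<theta> + K * E * J" unfolding M_def by simp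
    then show ?thesis using th by (intro mult_left_mono) auto
  qed
  finally show ?thesis unfolding K_def \<beta>_def J_def .
qed

lemma nearA:
  fixes \<theta> d wp wq :: real
  assumes "\<theta> > 0" "0 \<le> wq" "d/2 \<le> wp"
  shows "exp (- \<theta> * wp) * exp (- \<theta> * wq) \<le> exp (- \<theta> * d / 4) * exp (- (\<theta>/2) * wp)"
proof -
  have "exp (- \<theta> * wq) \<le> 1" using assms by simp
  then have "exp (- \<theta> * wp) * exp (- \<theta> * wq) \<le> exp (- \<theta> * wp)"
    by (simp add: mult_left_le)
  also have "\<dots> \<le> exp (- \<theta> * d / 4) * exp (- (\<theta>/2) * wp)"
  proof -
    have "0 \<le> \<theta> * (wp - d/2)" using assms by simp
    then have "- \<theta> * wp \<le> - \<theta> * d / 4 + - (\<theta>/2) * wp" by (simp add: algebra_simps)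
    then show ?thesis by (simp add: exp_add[symmetric])
  qed
  finally show ?thesis .
qed

lemma nearB:
  fixes \<theta> d wp wq :: real
  assumes "\<theta> > 0" "0 \<le> wp" "d/2 \<le> wq" "0 \<le> d"
  shows "exp (- \<theta> * wp) * exp (- \<theta> * wq) \<le> exp (- \<theta> * d / 4) * exp (- (\<theta>/2) * wp)"
proof -
  have a: "exp (- \<theta> * wp) \<le> exp (- (\<theta>/2) * wp)"
  proof -
    have "0 \<le> \<theta> * wp" using assms by simp
    then show ?thesis by simp
  qed
  have b: "exp (- \<theta> * wq) \<le> exp (- \<theta> * d / 4)"
  proof -
    have "0 \<le> \<theta> * (wq - d/2)" "0 \<le> \<theta> * d" using assms by simp_all
    then show ?thesis by (simp add: algebra_simps)
  qed
  have "exp (- \<theta> * wp) * exp (- \<theta> * wq) \<le> exp (- (\<theta>/2) * wp) * exp (- \<theta> * d / 4)"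
    by (rule mult_mono[OF a b]) auto
  then show ?thesis by (simp add: mult.commute)
qed

lemma hpl:
  fixes \<theta> w :: real assumes "\<theta> > 0" "0 \<le> w"
  shows "0 \<le> exp (- \<theta> * w) \<and> exp (- \<theta> * w) \<le> exp (- (\<theta>/2) * w)"
proof -
  have "0 \<le> \<theta> * w" using assms by simp
  then show ?thesis by simp
qed

lemma final_bound:
  fixes H \<theta> d :: real
  assumes H: "1/2 < H" "H < 1" and th: "\<theta> > 0" and d: "d > 0"
  shows "2/\<theta> * (H*(2*H-1) * (d/2) powr (2*H-2) / \<theta> + H*(2*H-1) * exp (- \<theta> * d / 4) * (2*((d/2) powr (2*H-2+1)/(2*H-2+1))))
     \<le> (4*(H*(2*H-1))/\<theta> * (1/\<theta> + 4/(\<theta>*(2*H-2+1)))) * d powr (2*H-2)"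
proof -
  define K where "K = H*(2*H-1)"
  define \<beta> where "\<beta> = 2*H-2"
  define X where "X = (d/2) powr \<beta>"
  define E where "E = exp (- \<theta> * d / 4)"
  have K0: "K > 0" unfolding K_def using H by auto
  have b1: "\<beta> + 1 > 0" unfolding \<beta>_def using H by auto
  have X0: "X > 0" unfolding X_def using d by simp
  have E0: "E > 0" unfolding E_def by simp
  have Xp: "(d/2) powr (\<beta>+1) = X * (d/2)" unfolding X_def using d by (simp add: powr_add)
  have Xle: "X \<le> 2 * d powr \<beta>"
  proof -
    have "X = d powr \<beta> / 2 powr \<beta>" unfolding X_def using d by (simp add: powr_divide)
    moreover have "2 powr \<beta> \<ge> 1/2"
    proof -
      have "(2::real) powr (-1) \<le> 2 powr \<beta>" using b1 by (intro powr_mono) auto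
      then show ?thesis by (simp add: powr_minus)
    qed
    moreover have "d powr \<beta> > 0" using d by simp
    ultimately have "X \<le> d powr \<beta> / (1/2)"
    proof -
      assume a: "X = d powr \<beta> / 2 powr \<beta>" "1/2 \<le> 2 powr \<beta>" "0 < d powr \<beta>"
      have "d powr \<beta> / 2 powr \<beta> \<le> d powr \<beta> / (1/2)"
        by (rule divide_left_mono) (use a in simp_all)
      then show ?thesis using a by simp
    qed
    then show ?thesis by simp
  qed
  have Ed: "E * d \<le> 4/\<theta>"
  proof -
    have "1 + \<theta>*d/4 \<le> exp (\<theta>*d/4)" by (rule exp_ge_add_one_self)
    then have "\<theta>*d/4 \<le> exp (\<theta>*d/4)" by linarith
    then have "E * (\<theta>*d/4) \<le> E * exp (\<theta>*d/4)" using E0 by (intro mult_left_mono) auto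
    also have "E * exp (\<theta>*d/4) = 1" unfolding E_def by (simp add: exp_add[symmetric])
    finally have "E * d * \<theta> \<le> 4" by (simp add: field_simps)
    then show ?thesis using th by (simp add: field_simps)
  qed
  have "2/\<theta> * (K * X / \<theta> + K * E * (2*((d/2) powr (\<beta>+1)/(\<beta>+1))))
      = 2/\<theta> * K * X * (1/\<theta> + (E*d)/(\<beta>+1))"
  proof -
    have e1: "2*((d/2) powr (\<beta>+1)/(\<beta>+1)) = X*d/(\<beta>+1)" using b1 unfolding Xp by (simp add: divide_simps)
    show ?thesis unfolding e1 using b1 th by (simp add: divide_simps) (simp add: algebra_simps)
  qed
  also have "\<dots> \<le> 2/\<theta> * K * (2 * d powr \<beta>) * (1/\<theta> + (4/\<theta>)/(\<beta>+1))"
  proof (rule mult_mono)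
    show "2/\<theta> * K * X \<le> 2/\<theta> * K * (2 * d powr \<beta>)"
      by (rule mult_left_mono[OF Xle]) (use th K0 in simp)
    show "1/\<theta> + (E*d)/(\<beta>+1) \<le> 1/\<theta> + (4/\<theta>)/(\<beta>+1)"
    proof -
      have "(E*d)/(\<beta>+1) \<le> (4/\<theta>)/(\<beta>+1)"
        by (rule divide_right_mono[OF Ed]) (use b1 in simp)
      then show ?thesis by simp
    qed
    show "0 \<le> 2/\<theta> * K * (2 * d powr \<beta>)" using th K0 by simp
    show "0 \<le> 1/\<theta> + (E*d)/(\<beta>+1)" using th E0 d b1 by simp
  qed
  also have "\<dots> = (4*K/\<theta> * (1/\<theta> + 4/(\<theta>*(\<beta>+1)))) * d powr \<beta>"
    using th b1 by (simp add: divide_simps)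
  finally show ?thesis unfolding K_def \<beta>_def X_def E_def .
qed


theorem lemma6p1:
  fixes H \<theta> :: real
  assumes "1/2 < H" and "H < 1" and "\<theta> > 0"
  shows "\<exists>C. \<forall>T s t. 0 \<le> s \<and> s \<le> T \<and> 0 \<le> t \<and> t \<le> T \<and> s \<noteq> t \<longrightarrow>
      sfbm_wiener_cov H (\<lambda>x. exp (- \<theta> * (x - s))) s T (\<lambda>y. exp (- \<theta> * (y - t))) t T
        \<le> C * \<bar>t - s\<bar> powr (2*H - 2)
    \<and> sfbm_wiener_cov H (\<lambda>u. exp (- \<theta> * (t - u))) 0 t (\<lambda>v. exp (- \<theta> * (s - v))) 0 s
        \<le> C * \<bar>t - s\<bar> powr (2*H - 2)"
proof (intro exI allI impI conjI)
  fix T s t :: real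
  assume st: "0 \<le> s \<and> s \<le> T \<and> 0 \<le> t \<and> t \<le> T \<and> s \<noteq> t"
  define d where "d = \<bar>t - s\<bar>"
  have d0: "d > 0" unfolding d_def using st by auto
  have r0: "d/2 > 0" using d0 by simp
  have th2: "\<theta>/2 > 0" using assms by simp
  have E0: "0 \<le> exp (- \<theta> * d / 4)" by simp
  have FB: "2/\<theta> * (H*(2*H-1) * (d/2) powr (2*H-2) / \<theta> + H*(2*H-1) * exp (- \<theta> * d / 4) * (2*((d/2) powr (2*H-2+1)/(2*H-2+1))))
     \<le> (4*(H*(2*H-1))/\<theta> * (1/\<theta> + 4/(\<theta>*(2*H-2+1)))) * \<bar>t - s\<bar> powr (2*H-2)"
    using final_bound[OF assms d0] unfolding d_def .
  have IPb: "(1 - exp (- (\<theta>/2) * (b - a))) / (\<theta>/2) \<le> 2/\<theta>" for a b :: real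
    using assms by (simp add: divide_right_mono)
  have IQb: "(1 - exp (- \<theta> * (b - a))) / \<theta> \<le> 1/\<theta>" for a b :: real
    using assms by (simp add: divide_right_mono)
  show "sfbm_wiener_cov H (\<lambda>x. exp (- \<theta> * (x - s))) s T (\<lambda>y. exp (- \<theta> * (y - t))) t T
        \<le> (4*(H*(2*H-1))/\<theta> * (1/\<theta> + 4/(\<theta>*(2*H-2+1)))) * \<bar>t - s\<bar> powr (2*H - 2)"
    unfolding sfbm_wiener_cov_def
  proof (rule order_trans[OF core[OF assms r0 E0, where PP="\<lambda>x. exp (- (\<theta>/2) * (x - s))"] FB])
    show "((\<lambda>x. exp (- (\<theta>/2) * (x - s))) has_integral (1 - exp (- (\<theta>/2) * (T - s))) / (\<theta>/2)) {s..T}"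
      using exp_right[OF th2, of s T] st by simp
    show "((\<lambda>y. exp (- \<theta> * (y - t))) has_integral (1 - exp (- \<theta> * (T - t))) / \<theta>) {t..T}"
      using exp_right[OF assms(3), of t T] st by simp
    show "exp (- \<theta> * (u - s)) * exp (- \<theta> * (v - t)) \<le> exp (- \<theta> * d / 4) * exp (- (\<theta>/2) * (u - s))"
      if "u \<in> {s..T}" "v \<in> {t..T}" "\<bar>u - v\<bar> \<le> d/2" for u v
    proof (cases "s < t")
      case True
      have a1: "u - v \<le> d/2" "- (u - v) \<le> d/2" using abs_le_D1[OF that(3)] abs_le_D2[OF that(3)] by auto
      have dd: "d = t - s" using True unfolding d_def by simp
      have m: "s \<le> u" "t \<le> v" using that(1,2) by auto
      show ?thesis by (rule nearA[OF assms(3)]) (use m a1 dd in linarith)+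
    next
      case False
      have a1: "u - v \<le> d/2" "- (u - v) \<le> d/2" using abs_le_D1[OF that(3)] abs_le_D2[OF that(3)] by auto
      have dd: "d = s - t" using False unfolding d_def by simp
      have m: "s \<le> u" "t \<le> v" using that(1,2) by auto
      show ?thesis by (rule nearB[OF assms(3)]) (use m a1 dd d0 in linarith)+
    qed
    show "0 \<le> exp (- \<theta> * (u - s)) \<and> exp (- \<theta> * (u - s)) \<le> exp (- (\<theta>/2) * (u - s))"
      if "u \<in> {s..T}" for u
      by (rule hpl[OF assms(3)]) (use that in simp)
    show "0 \<le> exp (- \<theta> * (v - t))" for v by simp
    show "(1 - exp (- (\<theta>/2) * (T - s))) / (\<theta>/2) \<le> 2/\<theta>" by (rule IPb)
    show "(1 - exp (- \<theta> * (T - t))) / \<theta> \<le> 1/\<theta>" by (rule IQb)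
  qed
  show "sfbm_wiener_cov H (\<lambda>u. exp (- \<theta> * (t - u))) 0 t (\<lambda>v. exp (- \<theta> * (s - v))) 0 s
        \<le> (4*(H*(2*H-1))/\<theta> * (1/\<theta> + 4/(\<theta>*(2*H-2+1)))) * \<bar>t - s\<bar> powr (2*H - 2)"
    unfolding sfbm_wiener_cov_def
  proof (rule order_trans[OF core[OF assms r0 E0, where PP="\<lambda>u. exp (- (\<theta>/2) * (t - u))"] FB])
    show "((\<lambda>u. exp (- (\<theta>/2) * (t - u))) has_integral (1 - exp (- (\<theta>/2) * (t - 0))) / (\<theta>/2)) {0..t}"
      using exp_left[OF th2, of 0 t] st by simp
    show "((\<lambda>v. exp (- \<theta> * (s - v))) has_integral (1 - exp (- \<theta> * (s - 0))) / \<theta>) {0..s}"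
      using exp_left[OF assms(3), of 0 s] st by simp
    show "exp (- \<theta> * (t - u)) * exp (- \<theta> * (s - v)) \<le> exp (- \<theta> * d / 4) * exp (- (\<theta>/2) * (t - u))"
      if "u \<in> {0..t}" "v \<in> {0..s}" "\<bar>u - v\<bar> \<le> d/2" for u v
    proof (cases "s < t")
      case True
      have a1: "u - v \<le> d/2" "- (u - v) \<le> d/2" using abs_le_D1[OF that(3)] abs_le_D2[OF that(3)] by auto
      have dd: "d = t - s" using True unfolding d_def by simp
      have m: "u \<le> t" "v \<le> s" using that(1,2) by auto
      show ?thesis by (rule nearA[OF assms(3)]) (use m a1 dd in linarith)+
    next
      case False
      have a1: "u - v \<le> d/2" "- (u - v) \<le> d/2" using abs_le_D1[OF that(3)] abs_le_D2[OF that(3)] by auto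
      have dd: "d = s - t" using False unfolding d_def by simp
      have m: "u \<le> t" "v \<le> s" using that(1,2) by auto
      show ?thesis by (rule nearB[OF assms(3)]) (use m a1 dd d0 in linarith)+
    qed
    show "0 \<le> exp (- \<theta> * (t - u)) \<and> exp (- \<theta> * (t - u)) \<le> exp (- (\<theta>/2) * (t - u))"
      if "u \<in> {0..t}" for u
      by (rule hpl[OF assms(3)]) (use that in simp)
    show "0 \<le> exp (- \<theta> * (s - v))" for v by simp
    show "(1 - exp (- (\<theta>/2) * (t - 0))) / (\<theta>/2) \<le> 2/\<theta>" by (rule IPb)
    show "(1 - exp (- \<theta> * (s - 0))) / \<theta> \<le> 1/\<theta>" by (rule IQb)
  qed
qed

end
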